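(* Let $N_E$ be the number of edges of the random intersection graph $\mathcal G(n,m,p)$, $n,m\ge3$, $p\in(0,1)$, and $\hat p=1-(1-p^2)^m$. Then $$\operatorname{Var}[N_E]=\binom n2\hat p(1-\hat p)+6\binom n3\Big[(1-2p^2+p^3)^m-(1-\hat p)^2\Big],$$ and $$\operatorname{Var}[N_E]\asymp n^2\hat p(1-\hat p)+n^3(1-2p^2+p^3)^m\big[1\wedge(mp^3)\big].$$ In particular, if $mp^3\le1$, then $\operatorname{Var}[N_E]\asymp n^2\hat p(1-\hat p)+n^3mp^3(1-\hat p)^2$.
   Context: Random intersection graph $\mathcal G(n,m,p)$: vertex set $\{v_1,\ldots,v_n\}$, attribute set $\{a_1,\ldots,a_m\}$; each vertex chooses each attribute independently with probability $p$, and two vertices are adjacent iff they chose at least one common attribute. Notation: $a\asymp b$ means $a,b>0$ and $c\,b\le a\le C\,b$ for positive constants $c,C$ not depending on $n,m,p$. *)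

theory Defs
  imports "HOL-Probability.Probability"
begin

text \<open>Random intersection graph G(n,m,p): vertices 0..<n, attributes 0..<m.
  An outcome is the indicator w (i,a) of "vertex i chose attribute a"; these are
  independent Bernoulli(p) variables.\<close>

definition rig :: "nat \<Rightarrow> nat \<Rightarrow> real \<Rightarrow> (nat \<times> nat \<Rightarrow> bool) pmf" where
  "rig n m p = Pi_pmf ({..<n} \<times> {..<m}) False (\<lambda>_. bernoulli_pmf p)"

definition rig_adj :: "nat \<Rightarrow> (nat \<times> nat \<Rightarrow> bool) \<Rightarrow> nat \<Rightarrow> nat \<Rightarrow> bool" where
  "rig_adj m w i j = (\<exists>a<m. w (i, a) \<and> w (j, a))"

definition num_edges :: "nat \<Rightarrow> nat \<Rightarrow> (nat \<times> nat \<Rightarrow> bool) \<Rightarrow> nat" where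
  "num_edges n m w = card {(i, j). i < j \<and> j < n \<and> rig_adj m w i j}"

definition var_edges :: "nat \<Rightarrow> nat \<Rightarrow> real \<Rightarrow> real" where
  "var_edges n m p = measure_pmf.variance (rig n m p) (\<lambda>w. real (num_edges n m w))"

definition p_hat :: "nat \<Rightarrow> real \<Rightarrow> real" where
  "p_hat m p = 1 - (1 - p^2)^m"

end

theory Submission
  imports Defs
begin


lemma integrable_pmf_bounded:
  fixes f :: "'a \<Rightarrow> real"
  assumes "\<And>x. \<bar>f x\<bar> \<le> B"
  shows "integrable (measure_pmf M) f"
  by (rule measure_pmf.integrable_const_bound[where B=B]) (use assms in auto)

definition colpmf :: "nat \<Rightarrow> real \<Rightarrow> (nat \<Rightarrow> bool) pmf" where
  "colpmf n p = Pi_pmf {..<n} False (\<lambda>_. bernoulli_pmf p)"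

lemma rig_cols:
  "rig n m p = map_pmf (\<lambda>F (i,a). F a i) (Pi_pmf {..<m} (\<lambda>_. False) (\<lambda>_. colpmf n p))"
proof (rule pmf_eqI)
  fix w :: "nat \<times> nat \<Rightarrow> bool"
  let ?g = "\<lambda>(F::nat \<Rightarrow> nat \<Rightarrow> bool) (i,a). F a i"
  have inj: "inj ?g"
  proof (rule injI)
    fix x y :: "nat \<Rightarrow> nat \<Rightarrow> bool"
    assume eq: "?g x = ?g y"
    show "x = y"
    proof (intro ext)
      fix a i show "x a i = y a i" using fun_cong[OF eq, of "(i,a)"] by simp
    qed
  qed
  have w: "w = ?g (\<lambda>a i. w (i,a))" by auto
  have "pmf (map_pmf ?g (Pi_pmf {..<m} (\<lambda>_. False) (\<lambda>_. colpmf n p))) w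
      = pmf (Pi_pmf {..<m} (\<lambda>_. False) (\<lambda>_. colpmf n p)) (\<lambda>a i. w (i,a))"
    by (subst w, subst pmf_map_inj'[OF inj]) simp
  also have "\<dots> = pmf (rig n m p) w"
  proof (cases "\<forall>x. x \<notin> {..<n} \<times> {..<m} \<longrightarrow> w x = False")
    case True
    have "pmf (Pi_pmf {..<m} (\<lambda>_. False) (\<lambda>_. colpmf n p)) (\<lambda>a i. w (i,a))
        = (\<Prod>a<m. pmf (colpmf n p) (\<lambda>i. w (i,a)))"
      by (subst pmf_Pi') (use True in auto)
    also have "\<dots> = (\<Prod>a<m. \<Prod>i<n. pmf (bernoulli_pmf p) (w (i,a)))"
      unfolding colpmf_def by (intro prod.cong refl, subst pmf_Pi') (use True in auto)
    also have "\<dots> = (\<Prod>x\<in>{..<n} \<times> {..<m}. pmf (bernoulli_pmf p) (w x))"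
      by (subst prod.swap) (simp add: prod.cartesian_product)
    also have "\<dots> = pmf (rig n m p) w"
      unfolding rig_def by (subst pmf_Pi') (use True in auto)
    finally show ?thesis .
  next
    case False
    then obtain i a where ia: "(i,a) \<notin> {..<n} \<times> {..<m}" "w (i,a)" by auto
    have "pmf (rig n m p) w = 0"
      unfolding rig_def by (rule pmf_Pi_outside) (use ia in auto)
    moreover have "pmf (Pi_pmf {..<m} (\<lambda>_. False) (\<lambda>_. colpmf n p)) (\<lambda>a i. w (i,a)) = 0"
    proof (cases "a < m")
      case True
      then have "i \<ge> n" using ia by auto
      have z: "pmf (colpmf n p) (\<lambda>i. w (i,a)) = 0"
        unfolding colpmf_def by (rule pmf_Pi_outside) (use ia \<open>i \<ge> n\<close> in \<open>auto intro!: exI[of _ i]\<close>)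
      have "(\<Prod>a<m. pmf (colpmf n p) (\<lambda>i. w (i,a))) = 0"
        by (rule prod_zero) (use z True in auto)
      then show ?thesis by (subst pmf_Pi) auto
    next
      case False
      show ?thesis by (rule pmf_Pi_outside) (use False ia in \<open>auto intro!: exI[of _ a] dest: fun_cong[of _ _ i]\<close>)
    qed
    ultimately show ?thesis by simp
  qed
  finally show "pmf (rig n m p) w = pmf (map_pmf ?g (Pi_pmf {..<m} (\<lambda>_. False) (\<lambda>_. colpmf n p))) w" by simp
qed

lemma prod01:
  assumes "finite A"
  shows "(\<Prod>x\<in>A. if Q x then 1 else 0) = (if \<forall>x\<in>A. Q x then 1 else (0::real))"
  using assms by (induction A rule: finite_induct) auto

lemma prod10:
  assumes "finite A"
  shows "(\<Prod>x\<in>A. if Q x then 0 else 1) = (if \<exists>x\<in>A. Q x then 0 else (1::real))"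
  using assms by (induction A rule: finite_induct) auto

lemma expect_cols:
  fixes h :: "(nat \<Rightarrow> bool) \<Rightarrow> real"
  assumes "\<And>c. 0 \<le> h c" "\<And>c. h c \<le> 1"
  shows "measure_pmf.expectation (rig n m p) (\<lambda>w. \<Prod>a<m. h (\<lambda>i. w (i,a)))
       = (measure_pmf.expectation (colpmf n p) h) ^ m"
proof -
  have "measure_pmf.expectation (rig n m p) (\<lambda>w. \<Prod>a<m. h (\<lambda>i. w (i,a)))
      = measure_pmf.expectation (Pi_pmf {..<m} (\<lambda>_. False) (\<lambda>_. colpmf n p)) (\<lambda>F. \<Prod>a<m. h (F a))"
    unfolding rig_cols by simp
  also have "\<dots> = (\<Prod>a<m. measure_pmf.expectation (colpmf n p) h)"
    by (rule expectation_prod_Pi_pmf[where f="\<lambda>_. h"])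
       (auto intro: integrable_pmf_bounded[where B=1] simp: assms abs_le_iff order_trans[OF _ assms(1)]
         order_trans[OF assms(2)])
  finally show ?thesis by simp
qed

definition ind :: "nat set \<Rightarrow> (nat \<Rightarrow> bool) \<Rightarrow> real" where
  "ind S c = (if \<forall>x\<in>S. c x then 1 else 0)"

lemma col_ind:
  assumes "S \<subseteq> {..<n}" "0 \<le> p" "p \<le> 1"
  shows "measure_pmf.expectation (colpmf n p) (ind S) = p ^ card S"
proof -
  have fin: "finite S" using assms(1) finite_subset by blast
  have eq: "(if \<forall>x\<in>S. c x then 1 else 0) = (\<Prod>x<n. if x \<in> S then (if c x then 1 else 0) else (1::real))" for c
  proof -
    have "(\<Prod>x<n. if x \<in> S then (if c x then 1 else 0) else (1::real)) = (\<Prod>x\<in>S. if c x then 1 else (0::real))"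
      by (subst prod.If_cases) (use assms(1) in \<open>auto simp: Int_absorb2 Int_absorb1 Int_commute\<close>)
    then show ?thesis by (simp add: prod01 fin)
  qed
  have "measure_pmf.expectation (colpmf n p) (\<lambda>c. if \<forall>x\<in>S. c x then 1 else 0)
     = measure_pmf.expectation (colpmf n p) (\<lambda>c. \<Prod>x<n. if x \<in> S then (if c x then 1 else 0) else (1::real))"
    by (simp only: eq)
  also have "\<dots> = (\<Prod>x<n. measure_pmf.expectation (bernoulli_pmf p) (\<lambda>b. if x \<in> S then (if b then 1 else 0) else (1::real)))"
    unfolding colpmf_def
    by (rule expectation_prod_Pi_pmf[where f="\<lambda>x b. if x \<in> S then (if b then 1 else 0) else (1::real)"])
       (auto intro: integrable_pmf_bounded[where B=1])
  also have "\<dots> = (\<Prod>x<n. if x \<in> S then p else 1)"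
    by (intro prod.cong refl) (simp add: integral_bernoulli_pmf assms)
  also have "\<dots> = p ^ card S"
    by (subst prod.If_cases) (use assms(1) in \<open>auto simp: Int_absorb2 Int_absorb1 Int_commute\<close>)
  finally show ?thesis unfolding ind_def .
qed

lemma col_pair:
  assumes "i < n" "j < n" "k < n" "l < n" "i \<noteq> j" "k \<noteq> l" "0 \<le> p" "p \<le> 1"
  shows "measure_pmf.expectation (colpmf n p)
      (\<lambda>c. (if c i \<and> c j then 0 else 1) * (if c k \<and> c l then 0 else (1::real)))
     = 1 - 2 * p^2 + p ^ card {i,j,k,l}"
proof -
  let ?I = "ind"
  have eq: "(if c i \<and> c j then 0 else 1) * (if c k \<and> c l then 0 else (1::real))
     = 1 - ?I {i,j} c - ?I {k,l} c + ?I {i,j,k,l} c" for c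
    by (auto simp: ind_def)
  have int: "integrable (measure_pmf (colpmf n p)) (?I S)" for S
    by (rule integrable_pmf_bounded[where B=1]) (auto simp: ind_def)
  have "measure_pmf.expectation (colpmf n p)
      (\<lambda>c. (if c i \<and> c j then 0 else 1) * (if c k \<and> c l then 0 else (1::real)))
     = measure_pmf.expectation (colpmf n p) (\<lambda>c. 1 - ?I {i,j} c - ?I {k,l} c + ?I {i,j,k,l} c)"
    by (simp only: eq)
  also have "\<dots> = 1 - p ^ card {i,j} - p ^ card {k,l} + p ^ card {i,j,k,l}"
    using assms int by (simp add: col_ind Bochner_Integration.integral_add Bochner_Integration.integral_diff)
  finally show ?thesis using assms by (simp add: power2_eq_square)
qed

definition Yf :: "nat \<Rightarrow> (nat \<times> nat \<Rightarrow> bool) \<Rightarrow> nat \<Rightarrow> nat \<Rightarrow> real" where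
  "Yf m w i j = (if rig_adj m w i j then 0 else 1)"

lemma Y_prod: "Yf m w i j = (\<Prod>a<m. if w (i,a) \<and> w (j,a) then 0 else 1)"
  by (auto simp: Yf_def rig_adj_def prod10)

lemma EYY:
  assumes "i < n" "j < n" "k < n" "l < n" "i \<noteq> j" "k \<noteq> l" "0 \<le> p" "p \<le> 1"
  shows "measure_pmf.expectation (rig n m p) (\<lambda>w. Yf m w i j * Yf m w k l)
      = (1 - 2 * p^2 + p ^ card {i,j,k,l}) ^ m"
proof -
  let ?h = "\<lambda>c. (if c i \<and> c j then 0 else 1) * (if c k \<and> c l then 0 else (1::real))"
  have "(\<lambda>w. Yf m w i j * Yf m w k l) = (\<lambda>w. \<Prod>a<m. ?h (\<lambda>i. w (i,a)))"
    by (simp add: Y_prod prod.distrib)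
  then have "measure_pmf.expectation (rig n m p) (\<lambda>w. Yf m w i j * Yf m w k l)
     = (measure_pmf.expectation (colpmf n p) ?h) ^ m"
    by (simp only:) (rule expect_cols, auto)
  also have "\<dots> = (1 - 2 * p^2 + p ^ card {i,j,k,l}) ^ m"
    using col_pair[OF assms] by simp
  finally show ?thesis .
qed

lemma cardP: "card {(i,j). i < j \<and> j < (n::nat)} = n choose 2"
proof (induction n)
  case 0
  then show ?case by simp
next
  case (Suc n)
  have eq: "{(i,j). i < j \<and> j < Suc n} = {(i,j). i < j \<and> j < n} \<union> (\<lambda>i. (i,n)) ` {..<n}"
    by auto
  have fin: "finite {(i,j). i < j \<and> j < (n::nat)}"
    by (rule finite_subset[of _ "{..<n} \<times> {..<n}"]) auto
  have "card {(i,j). i < j \<and> j < Suc n} = (n choose 2) + n"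
    unfolding eq by (subst card_Un_disjoint) (use fin Suc in \<open>auto simp: card_image inj_on_def\<close>)
  also have "\<dots> = Suc n choose 2"
    by (simp add: numeral_2_eq_2)
  finally show ?case .
qed

lemma card_S1:
  assumes "i < j" "j < n"
  shows "card {f \<in> {(i,j). i < j \<and> j < n}. f \<noteq> (i,j) \<and> (fst f \<in> {i,j} \<or> snd f \<in> {i,j})} = 2 * (n - 2)"
proof -
  let ?g = "\<lambda>(v,u). (min v u, max v u)"
  have eq: "{f \<in> {(i,j). i < j \<and> j < n}. f \<noteq> (i,j) \<and> (fst f \<in> {i,j} \<or> snd f \<in> {i,j})}
      = ?g ` (({..<n} - {i,j}) \<times> {i,j})"
  proof (rule set_eqI)
    fix f :: "nat \<times> nat"
    obtain k l where f: "f = (k,l)" by fastforce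
    show "f \<in> {f \<in> {(i,j). i < j \<and> j < n}. f \<noteq> (i,j) \<and> (fst f \<in> {i,j} \<or> snd f \<in> {i,j})}
      \<longleftrightarrow> f \<in> ?g ` (({..<n} - {i,j}) \<times> {i,j})"
    proof
      assume "f \<in> {f \<in> {(i,j). i < j \<and> j < n}. f \<noteq> (i,j) \<and> (fst f \<in> {i,j} \<or> snd f \<in> {i,j})}"
      then have h: "k < l" "l < n" "(k,l) \<noteq> (i,j)" "k = i \<or> k = j \<or> l = i \<or> l = j" using f by auto
      show "f \<in> ?g ` (({..<n} - {i,j}) \<times> {i,j})"
      proof (cases "k = i \<or> k = j")
        case True
        then have "f = ?g (l, k)" "(l,k) \<in> ({..<n} - {i,j}) \<times> {i,j}" using f h assms by auto
        then show ?thesis by blast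
      next
        case False
        then have "f = ?g (k, l)" "(k,l) \<in> ({..<n} - {i,j}) \<times> {i,j}" using f h assms by auto
        then show ?thesis by blast
      qed
    next
      assume "f \<in> ?g ` (({..<n} - {i,j}) \<times> {i,j})"
      then obtain v u where vu: "v < n" "v \<noteq> i" "v \<noteq> j" "u = i \<or> u = j" "f = (min v u, max v u)"
        by auto
      then show "f \<in> {f \<in> {(i,j). i < j \<and> j < n}. f \<noteq> (i,j) \<and> (fst f \<in> {i,j} \<or> snd f \<in> {i,j})}"
        using assms by (auto simp: min_def max_def)
    qed
  qed
  have inj: "inj_on ?g (({..<n} - {i,j}) \<times> {i,j})"
    by (auto simp: inj_on_def min_def max_def split: if_splits)
  have "card (({..<n} - {i,j}) \<times> {i,j}) = (n - 2) * 2"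
    using assms by (simp add: card_cartesian_product card_Diff_subset)
  then show ?thesis unfolding eq by (simp add: card_image[OF inj])
qed

lemma inner_sum:
  fixes m n :: nat and p :: real
  assumes ij: "i < j" "j < n" and p: "0 \<le> p" "p \<le> 1"
  defines "P \<equiv> {(i,j). i < j \<and> j < (n::nat)}"
  defines "q \<equiv> (1 - p^2) ^ m"
  shows "(\<Sum>f\<in>P. (1 - 2 * p^2 + p ^ card {i, j, fst f, snd f}) ^ m - q^2)
       = (q - q^2) + real (2 * (n - 2)) * ((1 - 2 * p^2 + p^3) ^ m - q^2)"
proof -
  define S1 where "S1 = {f \<in> P. f \<noteq> (i,j) \<and> (fst f \<in> {i,j} \<or> snd f \<in> {i,j})}"
  have finP: "finite P" unfolding P_def
    by (rule finite_subset[of _ "{..<n} \<times> {..<n}"]) auto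
  have eP: "(i,j) \<in> P" using ij unfolding P_def by auto
  have cS1: "card S1 = 2 * (n - 2)" unfolding S1_def P_def using card_S1[OF ij] by simp
  have pt: "(1 - 2 * p^2 + p ^ card {i, j, fst f, snd f}) ^ m - q^2
      = (if f = (i,j) then q - q^2 else 0) + (if f \<in> S1 then (1 - 2 * p^2 + p^3) ^ m - q^2 else 0)"
    if f: "f \<in> P" for f
  proof -
    obtain k l where kl: "f = (k,l)" by fastforce
    have kl2: "k < l" "l < n" using f kl unfolding P_def by auto
    consider "f = (i,j)" | "f \<noteq> (i,j)" "f \<in> S1" | "f \<noteq> (i,j)" "f \<notin> S1" by blast
    then show ?thesis
    proof cases
      case 1
      then have "card {i, j, fst f, snd f} = 2" using ij by (auto simp: insert_commute)
      then show ?thesis using 1 by (simp add: q_def S1_def power2_eq_square)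
    next
      case 2
      then have "card {i, j, fst f, snd f} = 3" using ij kl kl2 unfolding S1_def by (auto simp: card_insert_if)
      then show ?thesis using 2 by simp
    next
      case 3
      then have "card {i, j, fst f, snd f} = 4" using ij kl kl2 f unfolding S1_def by (auto simp: card_insert_if)
      moreover have "1 - 2 * p^2 + p^4 = (1 - p^2)^2" by (simp add: power2_eq_square power4_eq_xxxx algebra_simps)
      ultimately show ?thesis using 3 by (simp add: q_def power_mult[symmetric] power_mult_distrib mult.commute)
    qed
  qed
  have "(\<Sum>f\<in>P. (1 - 2 * p^2 + p ^ card {i, j, fst f, snd f}) ^ m - q^2)
      = (\<Sum>f\<in>P. (if f = (i,j) then q - q^2 else 0)) + (\<Sum>f\<in>P. (if f \<in> S1 then (1 - 2 * p^2 + p^3) ^ m - q^2 else 0))"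
    by (simp add: pt sum.distrib)
  also have "\<dots> = (q - q^2) + real (card S1) * ((1 - 2 * p^2 + p^3) ^ m - q^2)"
  proof -
    have "S1 \<subseteq> P" unfolding S1_def by auto
    then have "P \<inter> S1 = S1" by auto
    then have "(\<Sum>f\<in>P. (if f \<in> S1 then (1 - 2 * p^2 + p^3) ^ m - q^2 else 0)) = real (card S1) * ((1 - 2 * p^2 + p^3) ^ m - q^2)"
      using sum.inter_restrict[OF finP, of "\<lambda>_. (1 - 2 * p^2 + p^3) ^ m - q^2" S1, symmetric] by simp
    then show ?thesis using eP finP by (simp add: sum.delta')
  qed
  finally show ?thesis using cS1 by simp
qed

lemma var_formula:
  fixes m n :: nat and p :: real
  assumes p: "0 \<le> p" "p \<le> 1"
  shows "var_edges n m p = real (n choose 2) * (((1 - p^2)^m - ((1 - p^2)^m)^2)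
           + real (2 * (n - 2)) * ((1 - 2 * p^2 + p^3) ^ m - ((1 - p^2)^m)^2))"
proof -
  define P where "P = {(i,j). i < j \<and> j < (n::nat)}"
  define q where "q = (1 - p^2) ^ m"
  define Y where "Y e w = Yf m w (fst e) (snd e)" for e w
  define T where "T e f = (1 - 2 * p^2 + p ^ card {fst e, snd e, fst f, snd f}) ^ m" for e f :: "nat \<times> nat"
  define X where "X w = (\<Sum>e\<in>P. 1 - Y e w)" for w
  let ?M = "measure_pmf (rig n m p)"
  have finP: "finite P" unfolding P_def
    by (rule finite_subset[of _ "{..<n} \<times> {..<n}"]) auto
  have Y01: "Y e w = 0 \<or> Y e w = 1" for e w by (simp add: Y_def Yf_def)
  have num: "real (num_edges n m w) = X w" for w
  proof -
    have "{(i, j). i < j \<and> j < n \<and> rig_adj m w i j} = {e \<in> P. rig_adj m w (fst e) (snd e)}"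
      unfolding P_def by auto
    then have "real (num_edges n m w) = real (card {e \<in> P. rig_adj m w (fst e) (snd e)})"
      by (simp add: num_edges_def)
    also have "\<dots> = (\<Sum>e\<in>{e \<in> P. rig_adj m w (fst e) (snd e)}. 1)" by simp
    also have "\<dots> = (\<Sum>e\<in>P. if rig_adj m w (fst e) (snd e) then 1 else 0)"
      by (rule sum.inter_filter[OF finP])
    also have "\<dots> = X w" unfolding X_def Y_def Yf_def by (intro sum.cong) auto
    finally show ?thesis .
  qed
  have intY: "integrable ?M (Y e)" for e
    by (rule integrable_pmf_bounded[where B=1]) (simp add: Y_def Yf_def)
  have intYY: "integrable ?M (\<lambda>w. (1 - Y e w) * (1 - Y f w))" for e f
    by (rule integrable_pmf_bounded[where B=1]) (simp add: Y_def Yf_def)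
  have intX: "integrable ?M X" unfolding X_def using intY by auto
  have X2: "(X w)^2 = (\<Sum>e\<in>P. \<Sum>f\<in>P. (1 - Y e w) * (1 - Y f w))" for w
    unfolding X_def power2_eq_square by (simp add: sum_product)
  have intX2: "integrable ?M (\<lambda>w. (X w)^2)" unfolding X2 using intYY by auto
  have ETY: "measure_pmf.expectation (rig n m p) (\<lambda>w. Y e w * Y f w) = T e f" if "e \<in> P" "f \<in> P" for e f
    using that unfolding Y_def T_def P_def by (auto intro!: EYY p)
  have EY: "measure_pmf.expectation (rig n m p) (Y e) = q" if "e \<in> P" for e
  proof -
    have "Y e = (\<lambda>w. Y e w * Y e w)" using Y01[of e] by (auto intro!: ext)
    then have "measure_pmf.expectation (rig n m p) (Y e) = T e e" using ETY[OF that that] by simp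
    also have "card {fst e, snd e, fst e, snd e} = 2" using that unfolding P_def by (auto simp: insert_commute)
    then have "T e e = q" unfolding T_def q_def by (simp add: power2_eq_square)
    finally show ?thesis .
  qed
  have EX: "measure_pmf.expectation (rig n m p) X = (\<Sum>e\<in>P. 1 - q)"
    unfolding X_def using intY EY by (simp add: Bochner_Integration.integral_sum Bochner_Integration.integral_diff)
  have EX2: "measure_pmf.expectation (rig n m p) (\<lambda>w. (X w)^2) = (\<Sum>e\<in>P. \<Sum>f\<in>P. 1 - q - q + T e f)"
  proof -
    have "measure_pmf.expectation (rig n m p) (\<lambda>w. (X w)^2)
       = (\<Sum>e\<in>P. \<Sum>f\<in>P. measure_pmf.expectation (rig n m p) (\<lambda>w. (1 - Y e w) * (1 - Y f w)))"
      unfolding X2 using intYY by (simp add: Bochner_Integration.integral_sum)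
    also have "\<dots> = (\<Sum>e\<in>P. \<Sum>f\<in>P. 1 - q - q + T e f)"
    proof (intro sum.cong refl)
      fix e f assume ef: "e \<in> P" "f \<in> P"
      have "(\<lambda>w. (1 - Y e w) * (1 - Y f w)) = (\<lambda>w. 1 - Y e w - Y f w + Y e w * Y f w)"
        by (auto simp: algebra_simps)
      show "measure_pmf.expectation (rig n m p) (\<lambda>w. (1 - Y e w) * (1 - Y f w)) = 1 - q - q + T e f"
      proof -
        have i0: "integrable ?M (\<lambda>w. 1::real)" by simp
        have i1: "integrable ?M (\<lambda>w. 1 - Y e w)" by (intro Bochner_Integration.integrable_diff i0 intY)
        have i2: "integrable ?M (\<lambda>w. 1 - Y e w - Y f w)" by (intro Bochner_Integration.integrable_diff i1 intY)
        have i3: "integrable ?M (\<lambda>w. Y e w * Y f w)"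
          by (rule integrable_pmf_bounded[where B=1]) (simp add: Y_def Yf_def)
        have "measure_pmf.expectation (rig n m p) (\<lambda>w. 1 - Y e w - Y f w + Y e w * Y f w)
           = measure_pmf.expectation (rig n m p) (\<lambda>w. 1 - Y e w - Y f w) + T e f"
          using Bochner_Integration.integral_add[OF i2 i3] ETY[OF ef] by simp
        also have "measure_pmf.expectation (rig n m p) (\<lambda>w. 1 - Y e w - Y f w)
           = measure_pmf.expectation (rig n m p) (\<lambda>w. 1 - Y e w) - q"
          using Bochner_Integration.integral_diff[OF i1 intY] EY[OF ef(2)] by simp
        also have "measure_pmf.expectation (rig n m p) (\<lambda>w. 1 - Y e w) = 1 - q"
          using Bochner_Integration.integral_diff[OF i0 intY] EY[OF ef(1)] by simp
        finally show ?thesis using \<open>(\<lambda>w. (1 - Y e w) * (1 - Y f w)) = _\<close> by simp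
      qed
    qed
    finally show ?thesis .
  qed
  have "var_edges n m p = (\<Sum>e\<in>P. \<Sum>f\<in>P. 1 - q - q + T e f) - (\<Sum>e\<in>P. 1 - q)^2"
    unfolding var_edges_def num using measure_pmf.variance_eq[OF intX intX2] EX EX2 by simp
  also have "\<dots> = (\<Sum>e\<in>P. \<Sum>f\<in>P. T e f - q^2)"
  proof -
    have "(\<Sum>e\<in>P. \<Sum>f\<in>P. 1 - q - q + T e f) = (\<Sum>e\<in>P. \<Sum>f\<in>P. (T e f - q^2) + (1 - q) * (1 - q))"
      by (intro sum.cong refl) (simp add: power2_eq_square algebra_simps)
    also have "\<dots> = (\<Sum>e\<in>P. \<Sum>f\<in>P. T e f - q^2) + (\<Sum>e\<in>P. \<Sum>f\<in>P. (1 - q) * (1 - q))"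
      by (simp add: sum.distrib)
    also have "(\<Sum>e\<in>P. \<Sum>f\<in>P. (1 - q) * (1 - q)) = (\<Sum>e\<in>P. 1 - q)^2"
      by (simp add: power2_eq_square sum_product)
    finally show ?thesis by simp
  qed
  also have "\<dots> = (\<Sum>e\<in>P. (q - q^2) + real (2 * (n - 2)) * ((1 - 2 * p^2 + p^3) ^ m - q^2))"
  proof (intro sum.cong refl)
    fix e assume e: "e \<in> P"
    then obtain i j where ij: "e = (i,j)" "i < j" "j < n" unfolding P_def by auto
    show "(\<Sum>f\<in>P. T e f - q^2) = (q - q^2) + real (2 * (n - 2)) * ((1 - 2 * p^2 + p^3) ^ m - q^2)"
      using inner_sum[OF ij(2,3) p, of m] unfolding T_def ij(1) P_def q_def by simp
  qed
  also have "\<dots> = real (n choose 2) * ((q - q^2) + real (2 * (n - 2)) * ((1 - 2 * p^2 + p^3) ^ m - q^2))"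
    using cardP[of n] unfolding P_def by simp
  finally show ?thesis unfolding q_def .
qed



lemma choose2_real: "2 * real (n choose 2) = real n * (real n - 1)"
proof -
  have "2 * (n choose 2) = n * (n - 1 choose 1)" using times_binomial_minus1_eq[of 2 n] by simp
  then have "2 * (n choose 2) = n * (n - 1)" by simp
  then have "real (2 * (n choose 2)) = real (n * (n - 1))" by metis
  then show ?thesis by (cases n) (auto simp: algebra_simps)
qed

lemma choose3_real: "6 * real (n choose 3) = real n * (real n - 1) * (real n - 2)"
proof -
  have "3 * (n choose 3) = n * (n - 1 choose 2)" using times_binomial_minus1_eq[of 3 n] by simp
  then have "real (3 * (n choose 3)) = real (n * (n - 1 choose 2))" by (simp only:)
  then have "3 * real (n choose 3) = real n * real (n - 1 choose 2)" by simp
  then have "6 * real (n choose 3) = real n * (2 * real (n - 1 choose 2))" by simp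
  also have "2 * real (n - 1 choose 2) = real (n - 1) * (real (n - 1) - 1)" by (rule choose2_real)
  finally show ?thesis by (cases n) (auto simp: algebra_simps)
qed

lemma pow_diff_le:
  fixes a b :: real
  assumes "0 \<le> b" "b \<le> a"
  shows "a * (a^m - b^m) \<le> real m * (a - b) * a^m"
proof (induction m)
  case 0
  then show ?case by simp
next
  case (Suc m)
  have a0: "0 \<le> a" using assms by linarith
  have "a * (a^Suc m - b^Suc m) = a * (a * (a^m - b^m)) + a * (b^m * (a - b))"
    by (simp add: algebra_simps)
  also have "\<dots> \<le> a * (real m * (a - b) * a^m) + a * (a^m * (a - b))"
  proof (rule add_mono)
    show "a * (a * (a^m - b^m)) \<le> a * (real m * (a - b) * a^m)"
      by (rule mult_left_mono[OF Suc.IH a0])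
    have "b^m \<le> a^m" using assms by (intro power_mono) auto
    then show "a * (b^m * (a - b)) \<le> a * (a^m * (a - b))"
      using a0 assms by (intro mult_left_mono mult_right_mono) auto
  qed
  also have "\<dots> = real (Suc m) * (a - b) * a^Suc m" by (simp add: algebra_simps)
  finally show ?case .
qed

lemma bern_lower:
  fixes x :: real
  assumes "0 \<le> x" "x \<le> 1"
  shows "(1 - x)^m * (1 + real m * x) \<le> 1"
proof -
  have "1 + real m * x \<le> (1 + x)^m" by (rule Bernoulli_inequality) (use assms in auto)
  then have "(1 - x)^m * (1 + real m * x) \<le> (1 - x)^m * (1 + x)^m"
    using assms by (intro mult_left_mono) auto
  also have "\<dots> = (1 - x^2)^m" by (simp add: power_mult_distrib[symmetric] power2_eq_square algebra_simps)
  also have "\<dots> \<le> 1" using assms by (intro power_le_one) (auto simp: power_le_one)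
  finally show ?thesis .
qed

lemma D_upper:
  fixes p :: real
  assumes "0 < p" "p < 1"
  shows "(1 - 2*p^2 + p^3)^m - ((1 - p^2)^2)^m \<le> (1 - 2*p^2 + p^3)^m * min 1 (real m * p^3)"
proof -
  define a where "a = 1 - 2*p^2 + p^3"
  define b where "b = (1 - p^2)^2"
  have ab: "a - b = p^3 * (1 - p)" unfolding a_def b_def by (simp add: power2_eq_square power3_eq_cube algebra_simps)
  have a_alt: "a = (1 - p) * (1 + p - p^2)" unfolding a_def by (simp add: power2_eq_square power3_eq_cube algebra_simps)
  have p2: "p^2 < 1" using assms by (simp add: power_less_one_iff)
  have pp: "p^2 \<le> p" using assms by (simp add: power2_eq_square mult_left_le_one_le less_imp_le)
  have ga: "1 - p \<le> a" unfolding a_alt using assms pp by (intro mult_le_cancel_left1[THEN iffD2]) auto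
  have a0: "0 < a" using ga assms by linarith
  have b0: "0 \<le> b" unfolding b_def by simp
  have "0 \<le> p^3 * (1 - p)" using assms by simp
  then have ba: "b \<le> a" using ab by linarith
  have bm: "0 \<le> b^m" using b0 by simp
  have d1: "a^m - b^m \<le> a^m" using bm by linarith
  have "a * (a^m - b^m) \<le> real m * (a - b) * a^m" by (rule pow_diff_le[OF b0 ba])
  also have "\<dots> \<le> real m * (p^3 * a) * a^m"
    unfolding ab using ga assms by (intro mult_right_mono mult_left_mono) auto
  finally have "a * (a^m - b^m) \<le> a * (a^m * (real m * p^3))" by (simp add: algebra_simps)
  then have d2: "a^m - b^m \<le> a^m * (real m * p^3)" using a0 by (simp only: mult_le_cancel_left_pos)
  show ?thesis
    unfolding a_def[symmetric] b_def[symmetric]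
    using d1 d2 by (simp add: min_def)
qed

lemma D_lower:
  fixes p :: real
  assumes "0 < p" "p < 1"
  shows "2/5 * ((1 - 2*p^2 + p^3)^m * min 1 (real m * p^3)) \<le> (1 - 2*p^2 + p^3)^m - ((1 - p^2)^2)^m"
proof -
  define a where "a = 1 - 2*p^2 + p^3"
  define b where "b = (1 - p^2)^2"
  have ab: "a - b = p^3 * (1 - p)" unfolding a_def b_def by (simp add: power2_eq_square power3_eq_cube algebra_simps)
  have a_alt: "a = (1 - p) * (1 + p - p^2)" unfolding a_def by (simp add: power2_eq_square power3_eq_cube algebra_simps)
  have pp: "p^2 \<le> p" using assms by (simp add: power2_eq_square mult_left_le_one_le less_imp_le)
  have ga: "1 - p \<le> a" unfolding a_alt using assms pp by (intro mult_le_cancel_left1[THEN iffD2]) auto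
  have a0: "0 < a" using ga assms by linarith
  have b0: "0 \<le> b" unfolding b_def by simp
  have "0 \<le> p^3 * (1 - p)" using assms by simp
  then have ba: "b \<le> a" using ab by linarith
  have a54: "a \<le> 5/4 * (1 - p)"
  proof -
    have "(p - 1/2)^2 = p^2 - p + 1/4" by (simp add: power2_eq_square algebra_simps)
    moreover have "0 \<le> (p - 1/2)^2" by simp
    ultimately have "1 + p - p^2 \<le> 5/4" by linarith
    then have "(1 - p) * (1 + p - p^2) \<le> (1 - p) * (5/4)" using assms by (intro mult_left_mono) auto
    then show ?thesis unfolding a_alt by simp
  qed
  define x where "x = (a - b) / a"
  have x0: "0 \<le> x" unfolding x_def using ba a0 by simp
  have x1: "x \<le> 1" unfolding x_def using b0 a0 by simp
  have bx: "b = a * (1 - x)" unfolding x_def using a0 by (simp add: field_simps)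
  have xp: "4/5 * p^3 \<le> x"
  proof -
    have "4/5 * p^3 * a \<le> 4/5 * p^3 * (5/4 * (1 - p))" using a54 assms by (intro mult_left_mono) auto
    also have "\<dots> = a - b" unfolding ab by simp
    finally show ?thesis unfolding x_def using a0 by (simp add: field_simps)
  qed
  define y where "y = real m * x"
  have y0: "0 \<le> y" unfolding y_def using x0 by simp
  have "b^m * (1 + y) = a^m * ((1 - x)^m * (1 + real m * x))"
    unfolding bx y_def by (simp add: power_mult_distrib)
  also have "\<dots> \<le> a^m" using bern_lower[OF x0 x1, of m] a0 by (simp add: mult_left_le)
  finally have key: "b^m * (1 + y) \<le> a^m" .
  have am0: "0 \<le> a^m" using a0 by simp
  have Dy: "a^m * y \<le> (a^m - b^m) * (1 + y)" using key by (simp add: algebra_simps)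
  have "a^m * min 1 y \<le> 2 * (a^m - b^m)"
  proof (cases "y \<le> 1")
    case True
    have "a^m * y * 1 \<le> (a^m - b^m) * (1 + y)" using Dy by simp
    also have "\<dots> \<le> (a^m - b^m) * 2"
      using True power_mono[OF ba b0, of m] by (intro mult_left_mono) auto
    finally show ?thesis using True by (simp add: min_def)
  next
    case False
    have "a^m * 1 \<le> a^m * y" using False am0 by (intro mult_left_mono) auto
    then have "a^m * (1 + y) \<le> a^m * y * 2" by (simp add: algebra_simps)
    also have "a^m * y * 2 \<le> (a^m - b^m) * (1 + y) * 2" using Dy by simp
    finally have "a^m * (1 + y) \<le> (2 * (a^m - b^m)) * (1 + y)" by (simp add: algebra_simps)
    then have "a^m \<le> 2 * (a^m - b^m)" using y0 by (simp add: mult_le_cancel_right)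
    then show ?thesis using False by (simp add: min_def)
  qed
  moreover have "4/5 * min 1 (real m * p^3) \<le> min 1 y"
  proof -
    have "real m * (4/5 * p^3) \<le> real m * x" using xp by (intro mult_left_mono) auto
    then have "4/5 * (real m * p^3) \<le> y" unfolding y_def by (simp add: algebra_simps)
    then show ?thesis by (simp add: min_def)
  qed
  ultimately have "a^m * (4/5 * min 1 (real m * p^3)) \<le> 2 * (a^m - b^m)"
    using am0 by (meson mult_left_mono order_trans)
  then show ?thesis unfolding a_def[symmetric] b_def[symmetric] by (simp add: algebra_simps)
qed

lemma ratio_bound:
  fixes p :: real
  assumes "0 < p" "p < 1" "m \<ge> 3" "real m * p^3 \<le> 1"
  shows "(1 - 2*p^2 + p^3)^m \<le> exp 4 * ((1 - p^2)^2)^m"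
proof -
  define a where "a = 1 - 2*p^2 + p^3"
  define b where "b = (1 - p^2)^2"
  have ab: "a - b = p^3 * (1 - p)" unfolding a_def b_def by (simp add: power2_eq_square power3_eq_cube algebra_simps)
  have "3 * p^3 \<le> real m * p^3" using assms by (intro mult_right_mono) auto
  then have p3: "p^3 \<le> 1/3" using assms by linarith
  have p2: "p^2 \<le> 1/2"
  proof (rule ccontr)
    assume "\<not> p^2 \<le> 1/2"
    then have h: "p^2 > 1/2" by simp
    have "p > 7/10"
    proof (rule ccontr)
      assume "\<not> p > 7/10"
      then have "p * p \<le> 7/10 * (7/10)" using assms by (intro mult_mono) auto
      then show False using h by (simp add: power2_eq_square)
    qed
    then have "p * p^2 > 7/10 * (1/2)" using h by (intro mult_strict_mono) auto
    then have "p^3 > 7/10 * (1/2)" by (simp add: power3_eq_cube power2_eq_square mult.assoc)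
    then show False using p3 by simp
  qed
  have b4: "1/4 \<le> b"
  proof -
    have "1/2 \<le> 1 - p^2" using p2 by simp
    then have "(1/2)^2 \<le> (1 - p^2)^2" by (intro power_mono) auto
    then show ?thesis unfolding b_def by (simp add: power2_eq_square)
  qed
  have "p^3 * (1 - p) \<le> p^3 * 1" using assms by (intro mult_left_mono) auto
  then have "a \<le> b + p^3" using ab by simp
  also have "\<dots> \<le> b * (1 + 4 * p^3)"
  proof -
    have "p^3 * 1 \<le> p^3 * (4 * b)" using b4 assms by (intro mult_left_mono) auto
    then show ?thesis by (simp add: algebra_simps)
  qed
  finally have a1: "a \<le> b * (1 + 4 * p^3)" .
  have "0 \<le> p^3 * (1 - p)" using assms by simp
  then have a0: "0 \<le> a" using ab b4 by linarith
  have "a^m \<le> (b * (1 + 4 * p^3))^m" by (rule power_mono[OF a1 a0])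
  also have "\<dots> = b^m * (1 + 4 * p^3)^m" by (simp add: power_mult_distrib)
  also have "(1 + 4 * p^3)^m \<le> exp (4 * p^3)^m"
    using assms by (intro power_mono) (auto simp: add_nonneg_nonneg)
  also have "exp (4 * p^3)^m = exp (real m * (4 * p^3))" by (simp add: exp_of_nat_mult)
  also have "\<dots> \<le> exp 4" using assms by simp
  finally have "a^m \<le> b^m * exp 4" using b4 by (simp add: mult_left_mono)
  then show ?thesis unfolding a_def b_def by (simp add: mult.commute)
qed



lemma combine:
  fixes uu vv Dv c2 c3 N2 N3 :: real
  assumes "0 < uu" "0 \<le> vv" "2/5* vv \<le> Dv" "Dv \<le> vv" "N2/3 \<le> c2" "c2 \<le> N2/2" "2* N3/9 \<le> c3" "c3 \<le> N3" "0 < N2" "0 < N3"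
  shows "0 < c2* uu + c3* Dv \<and> 0 < N2* uu + N3* vv \<and> 4/45*(N2* uu+N3* vv) \<le> c2* uu + c3* Dv \<and> c2* uu + c3* Dv \<le> N2* uu + N3* vv"
proof -
  have c20: "0 < c2" using assms by linarith
  have c30: "0 < c3" using assms by linarith
  have D0: "0 \<le> Dv" using assms by linarith
  have l1: "N2/3 * uu \<le> c2 * uu" using assms by (intro mult_right_mono) auto
  have l2: "(2* N3/9) * (2/5* vv) \<le> c3 * Dv" using assms by (intro mult_mono) auto
  have u1: "c2 * uu \<le> N2/2 * uu" using assms by (intro mult_right_mono) auto
  have u2: "c3 * Dv \<le> N3 * vv" using assms D0 by (intro mult_mono) auto
  have p1: "0 < c2 * uu" using c20 assms by simp
  have p2: "0 \<le> c3 * Dv" using c30 D0 by simp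
  have p3: "0 < N2 * uu" using assms by simp
  have p4: "0 \<le> N3 * vv" using assms by simp
  show ?thesis using l1 l2 u1 u2 p1 p2 p3 p4 by (simp add: algebra_simps)
qed

lemma V_eq:
  fixes p :: real
  assumes "n \<ge> 2" "0 \<le> p" "p \<le> 1"
  shows "var_edges n m p = real (n choose 2) * ((1 - p^2)^m * (1 - (1 - p^2)^m))
     + 6 * real (n choose 3) * ((1 - 2*p^2 + p^3)^m - ((1 - p^2)^m)^2)"
proof -
  have eq: "real (n choose 2) * real (2 * (n - 2)) = 6 * real (n choose 3)"
  proof -
    have "real (n choose 2) * real (2 * (n - 2)) = (2 * real (n choose 2)) * (real n - 2)"
      using assms by (simp add: of_nat_diff)
    also have "\<dots> = 6 * real (n choose 3)" by (simp add: choose2_real choose3_real)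
    finally show ?thesis .
  qed
  have "var_edges n m p = real (n choose 2) * ((1 - p^2)^m - ((1 - p^2)^m)^2)
      + (real (n choose 2) * real (2 * (n - 2))) * ((1 - 2 * p^2 + p^3) ^ m - ((1 - p^2)^m)^2)"
    using var_formula[OF assms(2,3), of n m] by (simp only: distrib_left mult.assoc)
  also have "\<dots> = real (n choose 2) * ((1 - p^2)^m * (1 - (1 - p^2)^m))
     + 6 * real (n choose 3) * ((1 - 2*p^2 + p^3)^m - ((1 - p^2)^m)^2)"
    unfolding eq by (simp add: algebra_simps power2_eq_square)
  finally show ?thesis .
qed

lemma q_facts:
  fixes p :: real
  assumes "0 < p" "p < 1" "m \<ge> 1"
  shows "0 < (1 - p^2)^m" "(1 - p^2)^m < 1"
proof -
  have p2: "p^2 < 1" using assms by (simp add: power_less_one_iff)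
  have "0 < p^2" using assms by simp
  then show "0 < (1 - p^2)^m" using p2 by simp
  obtain k where k: "m = Suc k" using assms(3) by (cases m) auto
  show "(1 - p^2)^m < 1" unfolding k using p2 \<open>0 < p^2\<close> by (intro power_Suc_less_one) auto
qed

lemma sq_pow: "((x::real)^2)^m = (x^m)^2"
  by (metis power_mult mult.commute)

lemma binom_bounds:
  assumes "n \<ge> 3"
  shows "real n ^ 2 / 3 \<le> real (n choose 2)" "real (n choose 2) \<le> real n ^ 2 / 2"
        "2 * real n ^ 3 / 9 \<le> 6 * real (n choose 3)" "6 * real (n choose 3) \<le> real n ^ 3"
proof -
  have n3: "3 \<le> real n" using assms by simp
  have h1: "2/3 * real n \<le> real n - 1" using n3 by simp
  have h2: "1/3 * real n \<le> real n - 2" using n3 by simp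
  have "real n * (2/3 * real n) \<le> real n * (real n - 1)" using h1 by (intro mult_left_mono) auto
  then show "real n ^ 2 / 3 \<le> real (n choose 2)" using choose2_real[of n] by (simp add: power2_eq_square)
  have "real n * (real n - 1) \<le> real n * real n" by (intro mult_left_mono) auto
  then show "real (n choose 2) \<le> real n ^ 2 / 2" using choose2_real[of n] by (simp add: power2_eq_square)
  have "real n * (2/3 * real n) * (1/3 * real n) \<le> real n * (real n - 1) * (real n - 2)"
    using h1 h2 n3 by (intro mult_mono) auto
  then show "2 * real n ^ 3 / 9 \<le> 6 * real (n choose 3)" using choose3_real[of n] by (simp add: power3_eq_cube)
  have "real n * (real n - 1) * (real n - 2) \<le> real n * real n * real n"
    using n3 by (intro mult_mono) auto
  then show "6 * real (n choose 3) \<le> real n ^ 3" using choose3_real[of n] by (simp add: power3_eq_cube)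
qed

lemma bounds2:
  fixes p :: real
  assumes "n \<ge> 3" "m \<ge> 3" "0 < p" "p < 1"
  defines "B \<equiv> real n ^ 2 * (p_hat m p * (1 - p_hat m p))
                 + real n ^ 3 * ((1 - 2 * p^2 + p^3)^m * min 1 (real m * p^3))"
  shows "0 < var_edges n m p \<and> 0 < B \<and> 4/45 * B \<le> var_edges n m p \<and> var_edges n m p \<le> B"
proof -
  define q where "q = (1 - p^2)^m"
  have q: "0 < q" "q < 1" unfolding q_def using q_facts[of p m] assms by auto
  have ph: "p_hat m p = 1 - q" unfolding p_hat_def q_def by simp
  have V: "var_edges n m p = real (n choose 2) * (p_hat m p * (1 - p_hat m p))
     + (6 * real (n choose 3)) * ((1 - 2*p^2 + p^3)^m - (1 - p_hat m p)^2)"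
    using V_eq[of n p m] assms unfolding ph q_def by (simp add: algebra_simps)
  have Du: "(1 - 2*p^2 + p^3)^m - (1 - p_hat m p)^2 \<le> (1 - 2 * p^2 + p^3)^m * min 1 (real m * p^3)"
    using D_upper[of p m] assms unfolding ph q_def by (simp add: sq_pow)
  have Dl: "2/5 * ((1 - 2 * p^2 + p^3)^m * min 1 (real m * p^3)) \<le> (1 - 2*p^2 + p^3)^m - (1 - p_hat m p)^2"
    using D_lower[of p m] assms unfolding ph q_def by (simp add: sq_pow)
  have "0 \<le> (1 - 2 * p^2 + p^3)^m * min 1 (real m * p^3)"
    using Du Dl by linarith
  moreover have "0 < p_hat m p * (1 - p_hat m p)" unfolding ph using q by simp
  moreover have "0 < real n ^ 2" "0 < real n ^ 3" using assms by auto
  ultimately show ?thesis unfolding V B_def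
    by (intro combine Du Dl binom_bounds assms) auto
qed

lemma bounds3:
  fixes p :: real
  assumes "n \<ge> 3" "m \<ge> 3" "0 < p" "p < 1" "real m * p^3 \<le> 1"
  defines "B \<equiv> real n ^ 2 * p_hat m p * (1 - p_hat m p)
                 + real n ^ 3 * real m * p^3 * (1 - p_hat m p)^2"
  shows "0 < var_edges n m p \<and> 0 < B \<and> 4/45 * B \<le> var_edges n m p \<and> var_edges n m p \<le> exp 4 * B"
proof -
  define B2 where "B2 = real n ^ 2 * (p_hat m p * (1 - p_hat m p))
                 + real n ^ 3 * ((1 - 2 * p^2 + p^3)^m * min 1 (real m * p^3))"
  have b2: "0 < var_edges n m p \<and> 0 < B2 \<and> 4/45 * B2 \<le> var_edges n m p \<and> var_edges n m p \<le> B2"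
    unfolding B2_def using bounds2[OF assms(1-4)] by simp
  define q where "q = (1 - p^2)^m"
  have q: "0 < q" "q < 1" unfolding q_def using q_facts[of p m] assms by auto
  have ph: "1 - p_hat m p = q" unfolding p_hat_def q_def by simp
  have mn: "min 1 (real m * p^3) = real m * p^3" using assms by simp
  define A where "A = (1 - 2 * p^2 + p^3)^m"
  have qA: "q^2 \<le> A"
  proof -
    have ab: "1 - 2 * p^2 + p^3 - (1 - p^2)^2 = p^3 * (1 - p)"
      by (simp add: power2_eq_square power3_eq_cube algebra_simps)
    have "0 \<le> p^3 * (1 - p)" using assms by simp
    then have "(1 - p^2)^2 \<le> 1 - 2 * p^2 + p^3" using ab by linarith
    then have "((1 - p^2)^2)^m \<le> (1 - 2 * p^2 + p^3)^m" by (intro power_mono) auto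
    then show ?thesis unfolding A_def q_def sq_pow .
  qed
  have Aq: "A \<le> exp 4 * q^2" using ratio_bound[of p m] assms unfolding A_def q_def sq_pow by simp
  define uu where "uu = real n ^ 2 * (p_hat m p * (1 - p_hat m p))"
  define ww where "ww = real n ^ 3 * real m * p^3"
  have uu0: "0 < uu" unfolding uu_def using q assms ph by (simp add: p_hat_def q_def)
  have ww0: "0 \<le> ww" unfolding ww_def using assms by simp
  have B: "B = uu + ww * q^2" unfolding B_def uu_def ww_def ph by (simp add: algebra_simps)
  have B2': "B2 = uu + ww * A" unfolding B2_def uu_def ww_def mn A_def by (simp add: algebra_simps)
  have "ww * q^2 \<le> ww * A" using qA ww0 by (intro mult_left_mono)
  then have BB2: "B \<le> B2" unfolding B B2' by simp
  have "ww * A \<le> ww * (exp 4 * q^2)" using Aq ww0 by (intro mult_left_mono)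
  moreover have "uu \<le> exp 4 * uu" using uu0 by simp
  ultimately have B2B: "B2 \<le> exp 4 * B" unfolding B B2' by (simp add: algebra_simps)
  have "0 \<le> ww * q^2" using ww0 by simp
  then have "0 < B" unfolding B using uu0 by simp
  then show ?thesis using b2 BB2 B2B by auto
qed

theorem lemma3p1:
  shows
  "(\<forall>n m (p::real). n \<ge> 3 \<and> m \<ge> 3 \<and> 0 < p \<and> p < 1 \<longrightarrow>
      var_edges n m p =
        real (n choose 2) * p_hat m p * (1 - p_hat m p)
        + 6 * real (n choose 3) * ((1 - 2 * p^2 + p^3)^m - (1 - p_hat m p)^2))
   \<and> (\<exists>c C. 0 < c \<and> 0 < C \<and>
      (\<forall>n m (p::real). n \<ge> 3 \<and> m \<ge> 3 \<and> 0 < p \<and> p < 1 \<longrightarrow>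
        (let B = real n ^ 2 * p_hat m p * (1 - p_hat m p)
                 + real n ^ 3 * (1 - 2 * p^2 + p^3)^m * min 1 (real m * p^3)
         in 0 < var_edges n m p \<and> 0 < B \<and>
            c * B \<le> var_edges n m p \<and> var_edges n m p \<le> C * B)))
   \<and> (\<exists>c C. 0 < c \<and> 0 < C \<and>
      (\<forall>n m (p::real). n \<ge> 3 \<and> m \<ge> 3 \<and> 0 < p \<and> p < 1 \<and> real m * p^3 \<le> 1 \<longrightarrow>
        (let B = real n ^ 2 * p_hat m p * (1 - p_hat m p)
                 + real n ^ 3 * real m * p^3 * (1 - p_hat m p)^2
         in 0 < var_edges n m p \<and> 0 < B \<and>
            c * B \<le> var_edges n m p \<and> var_edges n m p \<le> C * B)))"
proof (intro conjI)
  show "\<forall>n m (p::real). n \<ge> 3 \<and> m \<ge> 3 \<and> 0 < p \<and> p < 1 \<longrightarrow>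
      var_edges n m p =
        real (n choose 2) * p_hat m p * (1 - p_hat m p)
        + 6 * real (n choose 3) * ((1 - 2 * p^2 + p^3)^m - (1 - p_hat m p)^2)"
  proof (intro allI impI)
    fix n m :: nat and p :: real
    assume h: "n \<ge> 3 \<and> m \<ge> 3 \<and> 0 < p \<and> p < 1"
    then show "var_edges n m p =
        real (n choose 2) * p_hat m p * (1 - p_hat m p)
        + 6 * real (n choose 3) * ((1 - 2 * p^2 + p^3)^m - (1 - p_hat m p)^2)"
      using V_eq[of n p m] unfolding p_hat_def by (simp add: algebra_simps)
  qed
  show "\<exists>c C. 0 < c \<and> 0 < C \<and>
      (\<forall>n m (p::real). n \<ge> 3 \<and> m \<ge> 3 \<and> 0 < p \<and> p < 1 \<longrightarrow>
        (let B = real n ^ 2 * p_hat m p * (1 - p_hat m p)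
                 + real n ^ 3 * (1 - 2 * p^2 + p^3)^m * min 1 (real m * p^3)
         in 0 < var_edges n m p \<and> 0 < B \<and>
            c * B \<le> var_edges n m p \<and> var_edges n m p \<le> C * B))"
  proof -
    have "\<forall>n m (p::real). n \<ge> 3 \<and> m \<ge> 3 \<and> 0 < p \<and> p < 1 \<longrightarrow>
        (let B = real n ^ 2 * p_hat m p * (1 - p_hat m p)
                 + real n ^ 3 * (1 - 2 * p^2 + p^3)^m * min 1 (real m * p^3)
         in 0 < var_edges n m p \<and> 0 < B \<and>
            4/45 * B \<le> var_edges n m p \<and> var_edges n m p \<le> 1 * B)"
      using bounds2 unfolding Let_def by (simp add: mult.assoc)
    then show ?thesis by (intro exI[of _ "4/45"] exI[of _ 1]) simp
  qed
  show "\<exists>c C. 0 < c \<and> 0 < C \<and>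
      (\<forall>n m (p::real). n \<ge> 3 \<and> m \<ge> 3 \<and> 0 < p \<and> p < 1 \<and> real m * p^3 \<le> 1 \<longrightarrow>
        (let B = real n ^ 2 * p_hat m p * (1 - p_hat m p)
                 + real n ^ 3 * real m * p^3 * (1 - p_hat m p)^2
         in 0 < var_edges n m p \<and> 0 < B \<and>
            c * B \<le> var_edges n m p \<and> var_edges n m p \<le> C * B))"
  proof -
    have "\<forall>n m (p::real). n \<ge> 3 \<and> m \<ge> 3 \<and> 0 < p \<and> p < 1 \<and> real m * p^3 \<le> 1 \<longrightarrow>
        (let B = real n ^ 2 * p_hat m p * (1 - p_hat m p)
                 + real n ^ 3 * real m * p^3 * (1 - p_hat m p)^2
         in 0 < var_edges n m p \<and> 0 < B \<and>
            4/45 * B \<le> var_edges n m p \<and> var_edges n m p \<le> exp 4 * B)"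
      using bounds3 unfolding Let_def by simp
    then show ?thesis by (intro exI[of _ "4/45"] exI[of _ "exp 4"]) simp
  qed
qed

end
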